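(* For the randomized implicit RK2 schemes (S1) and (S2), asymptotic stability and stability in probability are equivalent, and $$\mathcal{R}_{AS}=\mathcal{R}_{SP}=\Bigl\{z\in\mathbb{C}: \mathbb{E}\Bigl(\log\Bigl|1+\frac{z}{1-z\tau_1}\Bigr|\Bigr)<0\Bigr\}=\mathbb{C}_-.$$ In particular both schemes are A-stable in the asymptotic sense and in the sense of stability in probability.
   Context: Let $\tau_1,\tau_2,\ldots$ be independent random variables uniformly distributed on $[0,1]$. Applying either of the randomized implicit RK2 schemes (S1) or (S2) with step $h>0$ to Dahlquist's test equation $z'(t)=\lambda z(t)$, $z(0)=1$, $\lambda\in\mathbb{C}$, gives, with $z=\lambda h$, $V^k=\prod_{j=1}^k\bigl(1+\frac{z}{1-z\tau_j}\bigr)$, $k\ge0$ (almost surely well defined). The asymptotic stability region is $\mathcal{R}_{AS}=\{z\in\mathbb{C}: V^k\to0 \text{ almost surely as } k\to\infty\}$ and the region of stability in probability is $\mathcal{R}_{SP}=\{z\in\mathbb{C}: V^k\to0 \text{ in probability as } k\to\infty\}$. $\mathbb{C}_-=\{z\in\mathbb{C}:\Re(z)<0\}$. *)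

theory Defs
  imports "HOL-Probability.Probability"
begin

definition V :: "(nat \<Rightarrow> 'a \<Rightarrow> real) \<Rightarrow> complex \<Rightarrow> nat \<Rightarrow> 'a \<Rightarrow> complex" where
  "V \<tau> z k \<omega> = (\<Prod>j\<in>{1..k}. 1 + z / (1 - z * complex_of_real (\<tau> j \<omega>)))"

definition R_AS :: "'a measure \<Rightarrow> (nat \<Rightarrow> 'a \<Rightarrow> real) \<Rightarrow> complex set" where
  "R_AS M \<tau> = {z. AE \<omega> in M. (\<lambda>k. V \<tau> z k \<omega>) \<longlonglongrightarrow> 0}"

definition R_SP :: "'a measure \<Rightarrow> (nat \<Rightarrow> 'a \<Rightarrow> real) \<Rightarrow> complex set" where
  "R_SP M \<tau> = {z. \<forall>e>0. (\<lambda>k. measure M {\<omega> \<in> space M. e < cmod (V \<tau> z k \<omega>)}) \<longlonglongrightarrow> 0}"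

end

theory Submission
  imports Defs "HOL-Real_Asymp.Real_Asymp"
begin


lemma xlnx_cont: "continuous_on {0..1::real} (\<lambda>x. x - x * ln x)"
proof -
  have lim: "((\<lambda>x::real. x - x * ln x) \<longlongrightarrow> 0) (at_right 0)" by real_asymp
  show ?thesis
    unfolding continuous_on_eq_continuous_within
  proof
    fix x :: real assume x: "x \<in> {0..1}"
    show "continuous (at x within {0..1}) (\<lambda>x. x - x * ln x)"
    proof (cases "x = 0")
      case True
      have "((\<lambda>x::real. x - x * ln x) \<longlongrightarrow> 0) (at 0 within {0..1})"
        using lim by (metis at_right_to_0 filterlim_at_split  at_within_Icc_at_right zero_less_one tendsto_within_subset  at_within_Icc_at_right)
      then show ?thesis using True by (simp add: continuous_within)
    next
      case False
      then have "x > 0" using x by auto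
      then show ?thesis by (intro continuous_intros) auto
    qed
  qed
qed

lemma ln_int01: "set_integrable lborel {0..1::real} (\<lambda>x. - ln x)"
proof -
  have "((\<lambda>x. - ln x) has_integral ((\<lambda>x::real. x - x * ln x) 1 - (\<lambda>x. x - x * ln x) 0)) {0..1}"
  proof (rule fundamental_theorem_of_calculus_interior)
    show "continuous_on {0..1::real} (\<lambda>x. x - x * ln x)" by (rule xlnx_cont)
    fix x :: real assume x: "x \<in> {0<..<1}"
    show "((\<lambda>x. x - x * ln x) has_vector_derivative - ln x) (at x)"
      unfolding has_real_derivative_iff_has_vector_derivative[symmetric]
      using x by (auto intro!: derivative_eq_intros)
  qed auto
  then have "(\<lambda>x::real. - ln x) integrable_on {0..1}" by blast
  then have "(\<lambda>x::real. - ln x) absolutely_integrable_on {0..1}"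
    by (rule nonnegative_absolutely_integrable_1) (auto, metis ln_le_zero_iff ln_0 order_le_less)
  then show ?thesis
    unfolding set_integrable_def
    by (subst integrable_completion[symmetric]) auto
qed


definition phi :: "real \<Rightarrow> real" where "phi w = max 0 (- ln \<bar>w\<bar>)"

lemma phi_nonneg: "0 \<le> phi w" by (simp add: phi_def)

lemma phi_integrable: "integrable lborel phi"
proof -
  define psi where "psi w = indicator {0..1::real} w * (- ln w)" for w
  have i1: "integrable lborel psi" using ln_int01 unfolding set_integrable_def psi_def
    by (simp add: mult.commute)
  have i2: "integrable lborel (\<lambda>w. psi (0 + (-1) * w))"
    using lborel_integrable_real_affine[OF i1, of "-1" 0] by simp
  have eq: "phi w = psi w + psi (0 + (-1) * w)" for w
  proof -
    consider "w = 0" | "0 < w" "w \<le> 1" | "1 < w" | "-1 \<le> w" "w < 0" | "w < -1" by linarith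
    then show ?thesis
    proof cases
      case 2 then show ?thesis by (auto simp: phi_def psi_def indicator_def ln_le_zero_iff)
    next
      case 3 then show ?thesis by (auto simp: phi_def psi_def indicator_def)
    next
      case 4 then show ?thesis by (auto simp: phi_def psi_def indicator_def ln_le_zero_iff)
    next
      case 5 then show ?thesis by (auto simp: phi_def psi_def indicator_def)
    qed (auto simp: phi_def psi_def)
  qed
  show ?thesis unfolding eq[abs_def] using i1 i2 by (rule Bochner_Integration.integrable_add)
qed

definition ff :: "complex \<Rightarrow> real \<Rightarrow> complex" where
  "ff z u = 1 + z / (1 - z * complex_of_real u)"
definition LL :: "complex \<Rightarrow> real \<Rightarrow> real" where
  "LL z u = ln (cmod (ff z u))"

lemma ff_eq: "1 - z * complex_of_real u \<noteq> 0 \<Longrightarrow> ff z u = (1 + z * of_real (1 - u)) / (1 - z * of_real u)"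
  unfolding ff_def by (simp add: field_simps)

lemma LL_meas[measurable]: "LL z \<in> borel_measurable borel"
  unfolding LL_def ff_def by measurable

lemma Re_neg_B: assumes "Re z \<le> 0" "0 \<le> x"
  shows "1 \<le> cmod (1 - z * of_real x)"
proof -
  have "1 \<le> Re (1 - z * of_real x)" using assms by (simp add: mult_nonpos_nonneg)
  also have "\<dots> \<le> cmod (1 - z * of_real x)" by (rule complex_Re_le_cmod)
  finally show ?thesis .
qed

lemma cmod_1_plus_le: assumes "0 \<le> x" "x \<le> 1" shows "cmod (1 + w * of_real x) \<le> 1 + cmod w"
proof -
  have "cmod (1 + w * of_real x) \<le> 1 + cmod w * x" using norm_triangle_ineq[of 1 "w * of_real x"] assms
    by (simp add: norm_mult)
  also have "\<dots> \<le> 1 + cmod w" using assms by (simp add: mult_left_le)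
  finally show ?thesis .
qed

lemma ln_cmod_bound:
  assumes "0 \<le> v" "v \<le> 1" "1 + Re z * v \<noteq> 0"
  shows "\<bar>ln (cmod (1 + z * of_real v))\<bar> \<le> ln (1 + cmod z) + phi (1 + Re z * v)"
proof -
  have "\<bar>1 + Re z * v\<bar> = \<bar>Re (1 + z * of_real v)\<bar>" by simp
  also have "\<dots> \<le> cmod (1 + z * of_real v)" by (rule abs_Re_le_cmod)
  finally have lo: "\<bar>1 + Re z * v\<bar> \<le> cmod (1 + z * of_real v)" .
  have pos: "0 < \<bar>1 + Re z * v\<bar>" using assms by simp
  have up: "cmod (1 + z * of_real v) \<le> 1 + cmod z" using cmod_1_plus_le assms by blast
  have a: "ln (cmod (1 + z * of_real v)) \<le> ln (1 + cmod z)"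
    using up lo pos by (subst ln_le_cancel_iff) auto
  have b': "ln \<bar>1 + Re z * v\<bar> \<le> ln (cmod (1 + z * of_real v))"
    using lo pos by (subst ln_le_cancel_iff) auto
  then have b: "- ln (cmod (1 + z * of_real v)) \<le> - ln \<bar>1 + Re z * v\<bar>" by simp
  have c: "0 \<le> ln (1 + cmod z)" by simp
  show ?thesis using a b c unfolding phi_def by linarith
qed

lemma LL_bound:
  assumes "Re z < 0" "0 \<le> x" "x \<le> 1" "1 + Re z * (1 - x) \<noteq> 0"
  shows "\<bar>LL z x\<bar> \<le> 2 * ln (1 + cmod z) + phi (1 + Re z * (1 - x))"
proof -
  let ?A = "1 + z * of_real (1 - x)" and ?B = "1 - z * of_real x"
  have B1: "1 \<le> cmod ?B" using Re_neg_B assms by auto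
  have B2: "cmod ?B \<le> 1 + cmod z" using cmod_1_plus_le[of x "-z"] assms by simp
  have Bnz: "?B \<noteq> 0" using B1 by auto
  have lnB: "0 \<le> ln (cmod ?B)" "ln (cmod ?B) \<le> ln (1 + cmod z)"
    using B1 B2 by (auto, subst ln_le_cancel_iff, auto)
  have lnA: "\<bar>ln (cmod ?A)\<bar> \<le> ln (1 + cmod z) + phi (1 + Re z * (1 - x))"
    using ln_cmod_bound[of "1 - x" z] assms by simp
  show ?thesis
  proof (cases "?A = 0")
    case True
    then have "LL z x = 0" unfolding LL_def using ff_eq[OF Bnz] by simp
    then show ?thesis using lnB phi_nonneg[of "1 + Re z * (1 - x)"] by simp
  next
    case False
    have "LL z x = ln (cmod ?A) - ln (cmod ?B)" unfolding LL_def using ff_eq[OF Bnz] False Bnz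
      by (simp add: norm_divide ln_div)
    then show ?thesis using lnA lnB by linarith
  qed
qed

lemma U_density: "uniform_measure lborel {0..1::real} = density lborel (\<lambda>x. ennreal (indicator {0..1} x))"
  unfolding uniform_measure_def by (simp, rule arg_cong[where f="density lborel"], auto simp: indicator_def)

lemma U_integrable: fixes g :: "real \<Rightarrow> real" assumes [measurable]: "g \<in> borel_measurable borel"
  shows "integrable (uniform_measure lborel {0..1}) g \<longleftrightarrow> integrable lborel (\<lambda>x. indicator {0..1} x * g x)"
  unfolding U_density by (subst integrable_density) auto

lemma U_integral: fixes g :: "real \<Rightarrow> real" assumes [measurable]: "g \<in> borel_measurable borel"
  shows "integral\<^sup>L (uniform_measure lborel {0..1}) g = (\<integral>x. indicator {0..1} x * g x \<partial>lborel)"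
  unfolding U_density by (subst integral_density) auto

lemma ind_refl: "indicator {0..1::real} (1 + (-1) * x) = (indicator {0..1} x :: real)"
  by (auto simp: indicator_def)

lemma ind_refl2[simp]: "indicator {0..1::real} (1 - x) = (indicator {0..1} x :: real)"
  by (auto simp: indicator_def)

lemma sym_integrable: fixes g :: "real \<Rightarrow> real"
  shows "integrable lborel (\<lambda>x. indicator {0..1} x * g x) \<longleftrightarrow>
         integrable lborel (\<lambda>x. indicator {0..1} x * g (1 - x))"
  using lborel_integrable_real_affine_iff[of "-1" "\<lambda>x. indicator {0..1} x * g x" 1]
  by (simp add: ind_refl)

lemma sym_integral: fixes g :: "real \<Rightarrow> real"
  shows "(\<integral>x. indicator {0..1} x * g x \<partial>lborel) = (\<integral>x. indicator {0..1} x * g (1 - x) \<partial>lborel)"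
  using lborel_integral_real_affine[of "-1" "\<lambda>x. indicator {0..1} x * g x" 1]
  by (simp add: ind_refl)

lemma AE_ne: assumes "a \<noteq> 0 \<or> b \<noteq> 0"
  shows "AE x in lborel. a + b * complex_of_real x \<noteq> 0"
proof (cases "b = 0")
  case True then show ?thesis using assms by simp
next
  case False
  show ?thesis
  proof (rule eventually_mono[OF AE_lborel_singleton[of "Re (- a / b)"]])
    fix x :: real assume "x \<noteq> Re (- a / b)"
    show "a + b * complex_of_real x \<noteq> 0"
    proof
      assume h: "a + b * complex_of_real x = 0"
      have "complex_of_real x = - a / b" using h False by (simp add: field_simps add_eq_0_iff)
      then have "Re (complex_of_real x) = Re (- a / b)" by simp
      then show False using \<open>x \<noteq> Re (- a / b)\<close> by simp
    qed
  qed
qed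

lemma AE_ne_real: assumes "b \<noteq> (0::real)"
  shows "AE x in lborel. a + b * x \<noteq> 0"
proof (rule eventually_mono[OF AE_lborel_singleton[of "- a / b"]])
  fix x :: real assume "x \<noteq> - a / b"
  then show "a + b * x \<noteq> 0" using assms by (auto simp: field_simps)
qed

lemma LL_integrable:
  assumes z: "Re z < 0"
  shows "integrable lborel (\<lambda>x. indicator {0..1} x * LL z x)"
proof (rule Bochner_Integration.integrable_bound)
  let ?a = "Re z"
  have a: "?a \<noteq> 0" using z by simp
  have i0: "integrable lborel (\<lambda>x. phi ((1 + ?a) + (- ?a) * x))"
    by (rule lborel_integrable_real_affine[OF phi_integrable]) (use a in simp)
  have i1: "integrable lborel (\<lambda>x. phi ((1 + ?a) + (- ?a) * x) * indicator {0..1} x)"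
    using integrable_real_mult_indicator[OF _ i0] by simp
  have i2: "integrable lborel (\<lambda>x. 2 * ln (1 + cmod z) * indicator {0..1::real} x)"
    by (intro integrable_mult_right integrable_real_indicator) auto
  show "integrable lborel (\<lambda>x. 2 * ln (1 + cmod z) * indicator {0..1::real} x +
      phi ((1 + ?a) + (- ?a) * x) * indicator {0..1} x)"
    using i1 i2 by (rule Bochner_Integration.integrable_add[rotated])
  show "(\<lambda>x. indicator {0..1} x * LL z x) \<in> borel_measurable lborel" by measurable
  show "AE x in lborel. norm (indicator {0..1} x * LL z x) \<le> norm (2 * ln (1 + cmod z) * indicator {0..1::real} x +
      phi ((1 + ?a) + (- ?a) * x) * indicator {0..1} x)"
  proof (rule eventually_mono[OF AE_ne_real[of "- ?a" "1 + ?a"]])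
    show "- ?a \<noteq> 0" using a by simp
    fix x assume ne: "1 + ?a + - ?a * x \<noteq> 0"
    show "norm (indicator {0..1} x * LL z x) \<le> norm (2 * ln (1 + cmod z) * indicator {0..1::real} x +
      phi ((1 + ?a) + (- ?a) * x) * indicator {0..1} x)"
    proof (cases "x \<in> {0..1}")
      case True
      have "1 + ?a * (1 - x) \<noteq> 0" using ne by (simp add: algebra_simps)
      then have "\<bar>LL z x\<bar> \<le> 2 * ln (1 + cmod z) + phi (1 + ?a * (1 - x))"
        using LL_bound[OF z] True by auto
      moreover have "1 + ?a * (1 - x) = 1 + ?a + - ?a * x" by (simp add: algebra_simps)
      moreover have "0 \<le> ln (1 + cmod z)" by simp
      ultimately show ?thesis using True phi_nonneg[of "1 + ?a * (1 - x)"] by simp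
    qed simp
  qed
qed

definition Kf :: "complex \<Rightarrow> real \<Rightarrow> real" where
  "Kf z v = ln (cmod (1 + z * complex_of_real v)) - ln (cmod (1 - z * complex_of_real v))"

lemma cmod_sq_diff: "(cmod (1 + z * complex_of_real v))^2 = (cmod (1 - z * complex_of_real v))^2 + 4 * Re z * v"
  by (simp only: cmod_power2) (simp add: power2_eq_square algebra_simps)

lemma Kf_nonneg: assumes "0 \<le> Re z" "0 \<le> v" "1 - z * complex_of_real v \<noteq> 0"
  shows "0 \<le> Kf z v"
proof -
  have "(cmod (1 - z * complex_of_real v))^2 \<le> (cmod (1 + z * complex_of_real v))^2"
    using cmod_sq_diff[of z v] assms by simp
  then have le: "cmod (1 - z * complex_of_real v) \<le> cmod (1 + z * complex_of_real v)"
    by (rule power2_le_imp_le) simp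
  have pos: "0 < cmod (1 - z * complex_of_real v)" using assms(3) by simp
  have "ln (cmod (1 - z * complex_of_real v)) \<le> ln (cmod (1 + z * complex_of_real v))"
    using le pos by (subst ln_le_cancel_iff) auto
  then show ?thesis unfolding Kf_def by simp
qed

lemma Kf_neg: assumes "Re z < 0" "0 < v" "1 + z * complex_of_real v \<noteq> 0"
  shows "Kf z v < 0"
proof -
  have "(cmod (1 + z * complex_of_real v))^2 < (cmod (1 - z * complex_of_real v))^2"
    using cmod_sq_diff[of z v] assms by (simp add: mult_neg_pos)
  then have le: "cmod (1 + z * complex_of_real v) < cmod (1 - z * complex_of_real v)"
    by (rule power_less_imp_less_base) simp
  have pos: "0 < cmod (1 + z * complex_of_real v)" using assms(3) by simp
  have "ln (cmod (1 + z * complex_of_real v)) < ln (cmod (1 - z * complex_of_real v))"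
    using le pos by (subst ln_less_cancel_iff) auto
  then show ?thesis unfolding Kf_def by simp
qed

lemma Kf_nonpos: assumes "Re z < 0" "0 \<le> v" "1 + z * complex_of_real v \<noteq> 0"
  shows "Kf z v \<le> 0"
  using Kf_neg[OF assms(1) _ assms(3)] assms(2) by (cases "v = 0") (auto simp: Kf_def)

lemma LL_split: assumes "1 - z * complex_of_real u \<noteq> 0" "1 + z * complex_of_real (1 - u) \<noteq> 0"
  shows "LL z u = ln (cmod (1 + z * complex_of_real (1 - u))) - ln (cmod (1 - z * complex_of_real u))"
  unfolding LL_def using ff_eq[OF assms(1)] assms by (simp add: norm_divide ln_div del: of_real_diff)

lemma h_decomp:
  assumes "1 - z * complex_of_real x \<noteq> 0" "1 + z * complex_of_real (1 - x) \<noteq> 0"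
    "1 - z * complex_of_real (1 - x) \<noteq> 0" "1 + z * complex_of_real x \<noteq> 0"
  shows "LL z x + LL z (1 - x) = Kf z (1 - x) + Kf z x"
proof -
  have e1: "LL z x = ln (cmod (1 + z * complex_of_real (1 - x))) - ln (cmod (1 - z * complex_of_real x))"
    by (rule LL_split) (use assms in auto)
  have e2: "LL z (1 - x) = ln (cmod (1 + z * complex_of_real x)) - ln (cmod (1 - z * complex_of_real (1 - x)))"
    using LL_split[of z "1 - x"] assms by (simp del: of_real_diff)
  show ?thesis unfolding e1 e2 Kf_def by simp
qed

lemma Re_pos_nz: assumes "0 \<le> Re z" "0 \<le> v" shows "1 + z * complex_of_real v \<noteq> 0"
proof -
  have h: "1 \<le> Re (1 + z * complex_of_real v)" using assms by simp
  show ?thesis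
  proof
    assume "1 + z * complex_of_real v = 0"
    then have "Re (1 + z * complex_of_real v) = 0" by simp
    with h show False by simp
  qed
qed

lemma Re_neg_nz: assumes "Re z \<le> 0" "0 \<le> v" shows "1 - z * complex_of_real v \<noteq> 0"
  using Re_neg_B[OF assms] by auto

lemma AE_ne': "AE x in lborel. 1 - z * complex_of_real (1 - x) \<noteq> 0"
proof -
  have "AE x in lborel. (1 - z) + z * complex_of_real x \<noteq> 0" by (rule AE_ne) (cases "z = 0", auto)
  then show ?thesis by (rule eventually_mono) (auto simp: algebra_simps)
qed

lemma AE_ne'': "AE x in lborel. 1 + z * complex_of_real (1 - x) \<noteq> 0"
proof -
  have "AE x in lborel. (1 + z) + (- z) * complex_of_real x \<noteq> 0" by (rule AE_ne) (cases "z = 0", auto)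
  then show ?thesis by (rule eventually_mono) (auto simp: algebra_simps)
qed

lemma AE_B: "AE x in lborel. 1 - z * complex_of_real x \<noteq> 0"
  using AE_ne[of 1 "-z"] by simp

lemma AE_A1: "AE x in lborel. 1 + z * complex_of_real x \<noteq> 0"
  using AE_ne[of 1 z] by simp

lemma D_nonneg: assumes z: "0 \<le> Re z"
  shows "0 \<le> integral\<^sup>L (uniform_measure lborel {0..1}) (LL z)"
proof (cases "integrable lborel (\<lambda>x. indicator {0..1} x * LL z x)")
  case False
  then show ?thesis by (simp add: U_integral[symmetric] U_integrable[symmetric] not_integrable_integral_eq)
next
  case True
  have T2: "integrable lborel (\<lambda>x. indicator {0..1} x * LL z (1 - x))" using True sym_integrable by blast
  have "2 * integral\<^sup>L (uniform_measure lborel {0..1}) (LL z) =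
     (\<integral>x. indicator {0..1} x * LL z x \<partial>lborel) + (\<integral>x. indicator {0..1} x * LL z (1 - x) \<partial>lborel)"
    using sym_integral[of "LL z"] by (simp add: U_integral)
  also have "\<dots> = (\<integral>x. indicator {0..1} x * (LL z x + LL z (1 - x)) \<partial>lborel)"
    using True T2 by (simp add: distrib_left)
  also have "\<dots> \<ge> 0"
  proof (rule integral_nonneg_AE)
    show "AE x in lborel. 0 \<le> indicator {0..1} x * (LL z x + LL z (1 - x))"
      using AE_B[of z] AE_ne'[of z]
    proof eventually_elim
      case (elim x)
      show ?case
      proof (cases "x \<in> {0..1}")
        case True
        have "LL z x + LL z (1 - x) = Kf z (1 - x) + Kf z x"
          by (rule h_decomp) (use elim True z Re_pos_nz[of z "1 - x"] Re_pos_nz[of z x] in auto)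
        moreover have "0 \<le> Kf z (1 - x)" by (rule Kf_nonneg) (use elim True z in auto)
        moreover have "0 \<le> Kf z x" by (rule Kf_nonneg) (use elim True z in auto)
        ultimately show ?thesis using True by simp
      qed simp
    qed
  qed
  finally show ?thesis by simp
qed

lemma D_neg: assumes z: "Re z < 0"
  shows "integrable (uniform_measure lborel {0..1}) (LL z)"
    "integral\<^sup>L (uniform_measure lborel {0..1}) (LL z) < 0"
proof -
  have T1: "integrable lborel (\<lambda>x. indicator {0..1} x * LL z x)" by (rule LL_integrable[OF z])
  then show "integrable (uniform_measure lborel {0..1}) (LL z)" by (simp add: U_integrable)
  have T2: "integrable lborel (\<lambda>x. indicator {0..1} x * LL z (1 - x))" using T1 sym_integrable by blast
  define F where "F x = indicator {0..1} x * (LL z x + LL z (1 - x))" for x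
  have FI: "integrable lborel F" unfolding F_def distrib_left using T1 T2 by (rule Bochner_Integration.integrable_add)
  have "2 * integral\<^sup>L (uniform_measure lborel {0..1}) (LL z) =
     (\<integral>x. indicator {0..1} x * LL z x \<partial>lborel) + (\<integral>x. indicator {0..1} x * LL z (1 - x) \<partial>lborel)"
    using sym_integral[of "LL z"] by (simp add: U_integral)
  also have "\<dots> = integral\<^sup>L lborel F"
    unfolding F_def distrib_left by (rule Bochner_Integration.integral_add[symmetric]) (use T1 T2 in auto)
  finally have eq: "2 * integral\<^sup>L (uniform_measure lborel {0..1}) (LL z) = integral\<^sup>L lborel F" .
  have AEF: "AE x in lborel. F x \<le> 0 \<and> (x \<in> {0<..<1} \<longrightarrow> F x < 0)"
    using AE_ne''[of z] AE_A1[of z]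
  proof eventually_elim
    case (elim x)
    show ?case
    proof (cases "x \<in> {0..1}")
      case True
      have "LL z x + LL z (1 - x) = Kf z (1 - x) + Kf z x"
        by (rule h_decomp) (use elim True z Re_neg_nz[of z "1 - x"] Re_neg_nz[of z x] in auto)
      moreover have "Kf z (1 - x) \<le> 0" by (rule Kf_nonpos) (use elim True z in auto)
      moreover have "Kf z x \<le> 0" by (rule Kf_nonpos) (use elim True z in auto)
      moreover have "x \<in> {0<..<1} \<Longrightarrow> Kf z x < 0" by (rule Kf_neg) (use elim True z in auto)
      ultimately show ?thesis using True by (auto simp: F_def)
    qed (auto simp add: F_def)
  qed
  have "integral\<^sup>L lborel F < 0"
  proof (rule ccontr)
    assume "\<not> integral\<^sup>L lborel F < 0"
    moreover have "integral\<^sup>L lborel F \<le> 0"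
      using integral_nonneg_AE[of "\<lambda>x. - F x" lborel] AEF by (auto elim: eventually_mono)
    ultimately have "integral\<^sup>L lborel (\<lambda>x. - F x) = 0" by simp
    moreover have "AE x in lborel. 0 \<le> - F x" using AEF by (auto elim: eventually_mono)
    ultimately have "AE x in lborel. - F x = 0"
      using integral_nonneg_eq_0_iff_AE[of lborel "\<lambda>x. - F x"] FI by auto
    with AEF have "AE x in lborel. x \<notin> {0<..<1::real}" by (auto elim: eventually_mono)
    then have "emeasure lborel {x::real. 0 < x \<and> x < 1} = 0" by (subst (asm) AE_iff_measurable[OF _ refl]) auto
    moreover have "{x::real. 0 < x \<and> x < 1} = {0<..<1}" by auto
    ultimately show False by simp
  qed
  with eq show "integral\<^sup>L (uniform_measure lborel {0..1}) (LL z) < 0" by simp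
qed



abbreviation "U \<equiv> uniform_measure lborel {0..1::real}"

lemma prob_U: "prob_space U"
  by (rule prob_space_uniform_measure) auto

lemma V_eq: "V \<tau> z k \<omega> = (\<Prod>j\<in>{1..k}. ff z (\<tau> j \<omega>))"
  unfolding V_def ff_def ..

lemma U_refl: "distr U borel (\<lambda>u. 1 - u) = U"
proof (rule measure_eqI)
  show "sets (distr U borel (\<lambda>u. 1 - u)) = sets U" by simp
  fix A assume "A \<in> sets (distr U borel (\<lambda>u::real. 1 - u))"
  then have A[measurable]: "A \<in> sets borel" by simp
  have pre[measurable]: "(\<lambda>u::real. 1 - u) -` A \<in> sets borel"
    using measurable_sets[of "\<lambda>u::real. 1 - u" borel borel A] A by simp
  have "emeasure lborel ({0..1} \<inter> A) = (\<integral>\<^sup>+x. indicator ({0..1} \<inter> A) x \<partial>lborel)"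
    by (simp add: nn_integral_indicator)
  also have "\<dots> = (\<integral>\<^sup>+x. indicator ({0..1} \<inter> A) (1 + (-1) * x) \<partial>lborel)"
    by (subst nn_integral_real_affine[where c="-1" and t=1]) auto
  also have "\<dots> = (\<integral>\<^sup>+x. indicator ({0..1} \<inter> (\<lambda>u. 1 - u) -` A) x \<partial>lborel)"
    by (intro nn_integral_cong) (auto simp: indicator_def)
  also have "\<dots> = emeasure lborel ({0..1} \<inter> (\<lambda>u::real. 1 - u) -` A)"
    by (simp add: nn_integral_indicator)
  finally have eq: "emeasure lborel ({0..1} \<inter> A) = emeasure lborel ({0..1} \<inter> (\<lambda>u::real. 1 - u) -` A)" .
  show "emeasure (distr U borel (\<lambda>u. 1 - u)) A = emeasure U A"
    using eq by (simp add: emeasure_distr)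
qed

definition gfun :: "complex \<Rightarrow> real \<Rightarrow> real" where
  "gfun z u = sqrt (1 + (cmod z)^2 * (1 - u)^2) / sqrt (1 + (cmod z)^2 * u^2)"

lemma gfun_pos: "0 < gfun z u"
  unfolding gfun_def by (intro divide_pos_pos) (auto intro: add_pos_nonneg)

lemma gfun_refl: "gfun z (1 - u) = inverse (gfun z u)"
  unfolding gfun_def by simp

lemma gfun_meas[measurable]: "gfun z \<in> borel_measurable borel"
  unfolding gfun_def by measurable

lemma cmod_sq_gen: "(cmod (1 + w * complex_of_real v))^2 = 1 + 2 * Re w * v + (cmod w)^2 * v^2"
  by (simp only: cmod_power2) (simp add: power2_eq_square algebra_simps)

lemma cmod_sq_gen': "(cmod (1 - w * complex_of_real v))^2 = 1 - 2 * Re w * v + (cmod w)^2 * v^2"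
  using cmod_sq_gen[of "- w" v] by simp

lemma gfun_le: assumes "0 \<le> Re z" "0 \<le> u" "u \<le> 1" "1 - z * complex_of_real u \<noteq> 0"
  shows "gfun z u \<le> cmod (ff z u)"
proof -
  let ?A = "1 + z * complex_of_real (1 - u)" and ?B = "1 - z * complex_of_real u"
  have "1 + (cmod z)^2 * (1 - u)^2 \<le> (cmod ?A)^2"
    using cmod_sq_gen[of z "1 - u"] assms by simp
  then have a: "sqrt (1 + (cmod z)^2 * (1 - u)^2) \<le> cmod ?A"
    by (metis norm_ge_zero real_sqrt_le_mono real_sqrt_unique)
  have "(cmod ?B)^2 \<le> 1 + (cmod z)^2 * u^2"
    using cmod_sq_gen'[of z u] assms by simp
  then have b: "cmod ?B \<le> sqrt (1 + (cmod z)^2 * u^2)"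
    by (metis norm_ge_zero real_sqrt_le_mono real_sqrt_unique)
  have bpos: "0 < cmod ?B" using assms by simp
  have "gfun z u \<le> cmod ?A / cmod ?B"
    unfolding gfun_def by (rule frac_le) (use a b bpos in auto)
  also have "\<dots> = cmod (ff z u)" using ff_eq[OF assms(4)] by (simp add: norm_divide)
  finally show ?thesis .
qed

locale tau_setup = prob_space M for M :: "'a measure" +
  fixes \<tau> :: "nat \<Rightarrow> 'a \<Rightarrow> real"
  assumes indep: "indep_vars (\<lambda>_. borel) \<tau> {1..}"
    and meas: "\<And>j. j \<ge> 1 \<Longrightarrow> \<tau> j \<in> borel_measurable M"
    and law: "\<And>j. j \<ge> 1 \<Longrightarrow> distr M lborel (\<tau> j) = U"
begin

lemma law_borel: assumes "j \<ge> 1" shows "distr M borel (\<tau> j) = U"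
proof (rule measure_eqI)
  show "sets (distr M borel (\<tau> j)) = sets U" by simp
  fix A assume "A \<in> sets (distr M borel (\<tau> j))"
  then have A: "A \<in> sets borel" by simp
  have "emeasure (distr M borel (\<tau> j)) A = emeasure (distr M lborel (\<tau> j)) A"
    using A meas[OF assms] by (simp add: emeasure_distr)
  then show "emeasure (distr M borel (\<tau> j)) A = emeasure U A" using law[OF assms] by simp
qed

lemma AE_tau: assumes "j \<ge> 1" "AE x in U. P x" "Measurable.pred borel P"
  shows "AE \<omega> in M. P (\<tau> j \<omega>)"
proof -
  have "AE x in distr M borel (\<tau> j). P x" by (subst law_borel[OF assms(1)]) (rule assms(2))
  then show ?thesis using meas[OF assms(1)] assms(3)
    by (subst (asm) AE_distr_iff) auto
qed

lemma integral_tau: assumes "j \<ge> 1" and [measurable]: "g \<in> borel_measurable borel"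
  shows "(\<integral>\<omega>. g (\<tau> j \<omega>) \<partial>M) = integral\<^sup>L U (g :: real \<Rightarrow> real)"
    and "integrable M (\<lambda>\<omega>. g (\<tau> j \<omega>)) \<longleftrightarrow> integrable U g"
proof -
  show "(\<integral>\<omega>. g (\<tau> j \<omega>) \<partial>M) = integral\<^sup>L U g"
    using integral_distr[OF meas[OF assms(1)], of g] law_borel[OF assms(1)] by simp
  show "integrable M (\<lambda>\<omega>. g (\<tau> j \<omega>)) \<longleftrightarrow> integrable U g"
    using integrable_distr_eq[OF meas[OF assms(1)], of g] law_borel[OF assms(1)] by simp
qed

lemma V_meas[measurable]: "(\<lambda>\<omega>. V \<tau> z k \<omega>) \<in> borel_measurable M"
  unfolding V_def
  by (intro borel_measurable_prod measurable_compose[OF meas] borel_measurable_add borel_measurable_divide) 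
     (auto intro!: borel_measurable_diff borel_measurable_times measurable_compose[OF meas])

lemma law_refl: assumes "j \<ge> 1" shows "distr M borel (\<lambda>\<omega>. 1 - \<tau> j \<omega>) = U"
proof -
  have "distr M borel (\<lambda>\<omega>. 1 - \<tau> j \<omega>) = distr (distr M borel (\<tau> j)) borel (\<lambda>u. 1 - u)"
    using meas[OF assms] by (subst distr_distr) (auto simp: comp_def)
  also have "\<dots> = U" using law_borel[OF assms] U_refl by simp
  finally show ?thesis .
qed

lemma half_bound: assumes z: "0 \<le> Re z" and k: "k \<ge> 1"
  shows "1/2 \<le> measure M {\<omega> \<in> space M. 1/2 < cmod (V \<tau> z k \<omega>)}"
proof -
  define I where "I = {1..k}"
  have I: "finite I" "I \<noteq> {}" "I \<subseteq> {1..}" using k by (auto simp: I_def)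
  define Y where "Y j = (if j \<in> I then \<tau> j else (\<lambda>_. 0))" for j
  define Y' where "Y' j = (if j \<in> I then (\<lambda>\<omega>. 1 - \<tau> j \<omega>) else (\<lambda>_. 0))" for j
  have jI: "j \<in> I \<Longrightarrow> j \<ge> 1" for j using I by auto
  have rvY: "random_variable borel (Y j)" for j using meas jI by (auto simp: Y_def)
  have rvY': "random_variable borel (Y' j)" for j using meas jI by (auto simp: Y'_def)
  have indY: "indep_vars (\<lambda>_. borel) Y I"
    using indep_vars_subset[OF indep I(3)] by (subst indep_vars_cong[of I I Y \<tau>]) (auto simp: Y_def)
  have "indep_vars (\<lambda>_. borel) (\<lambda>i x. 1 - Y i x) I"
    by (rule indep_vars_compose2[OF indY]) auto
  then have indY': "indep_vars (\<lambda>_. borel) Y' I"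
    by (subst indep_vars_cong[of I I Y' "\<lambda>i x. 1 - Y i x"]) (auto simp: Y_def Y'_def)
  define P where "P = (\<Pi>\<^sub>M i\<in>I. (borel :: real measure))"
  define X where "X \<omega> = (\<lambda>j\<in>I. Y j \<omega>)" for \<omega>
  define X' where "X' \<omega> = (\<lambda>j\<in>I. Y' j \<omega>)" for \<omega>
  have "distr M P X = (\<Pi>\<^sub>M i\<in>I. distr M borel (Y i))"
    unfolding P_def X_def using indep_vars_iff_distr_eq_PiM[OF I(2) rvY] indY by simp
  also have "\<dots> = (\<Pi>\<^sub>M i\<in>I. U)"
    by (rule PiM_cong) (auto simp: Y_def law_borel[OF jI])
  also have "\<dots> = (\<Pi>\<^sub>M i\<in>I. distr M borel (Y' i))"
    by (rule PiM_cong) (auto simp: Y'_def law_refl[OF jI])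
  also have "\<dots> = distr M P X'"
    unfolding P_def X'_def using indep_vars_iff_distr_eq_PiM[OF I(2) rvY'] indY' by simp
  finally have DX: "distr M P X = distr M P X'" .
  have Xm: "X \<in> measurable M P" unfolding P_def X_def using rvY by measurable
  have X'm: "X' \<in> measurable M P" unfolding P_def X'_def using rvY' by measurable
  define \<Phi> where "\<Phi> x = (\<Prod>j\<in>I. gfun z (x j))" for x
  have \<Phi>m: "\<Phi> \<in> borel_measurable P" unfolding \<Phi>_def P_def by measurable
  define S where "S = {x \<in> space P. 1 \<le> \<Phi> x}"
  have S: "S \<in> sets P" unfolding S_def using \<Phi>m by measurable
  define G where "G \<omega> = (\<Prod>j\<in>I. gfun z (\<tau> j \<omega>))" for \<omega>
  have Gpos: "0 < G \<omega>" for \<omega> unfolding G_def using gfun_pos by (simp add: prod_pos)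
  have GX: "\<Phi> (X \<omega>) = G \<omega>" for \<omega> unfolding \<Phi>_def X_def G_def Y_def by (intro prod.cong) auto
  have GX': "\<Phi> (X' \<omega>) = inverse (G \<omega>)" for \<omega>
  proof -
    have "\<Phi> (X' \<omega>) = (\<Prod>j\<in>I. inverse (gfun z (\<tau> j \<omega>)))"
      unfolding \<Phi>_def X'_def Y'_def by (intro prod.cong) (auto simp: gfun_refl)
    also have "\<dots> = inverse (G \<omega>)" unfolding G_def using prod_inversef[of "\<lambda>j. gfun z (\<tau> j \<omega>)" I]
      by (simp add: comp_def)
    finally show ?thesis .
  qed
  have Gm[measurable]: "G \<in> borel_measurable M" unfolding G_def using meas jI by measurable
  have "measure M {\<omega> \<in> space M. 1 \<le> G \<omega>} = measure (distr M P X) S"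
    using Xm S by (subst measure_distr) (auto intro!: arg_cong[where f="measure M"] simp: S_def GX measurable_space)
  also have "\<dots> = measure (distr M P X') S" using DX by simp
  also have "\<dots> = measure M {\<omega> \<in> space M. 1 \<le> inverse (G \<omega>)}"
    using X'm S by (subst measure_distr) (auto intro!: arg_cong[where f="measure M"] simp: S_def GX' measurable_space)
  also have "{\<omega> \<in> space M. 1 \<le> inverse (G \<omega>)} = {\<omega> \<in> space M. G \<omega> \<le> 1}"
    using Gpos by (auto simp: one_le_inverse_iff)
  finally have eqm: "measure M {\<omega> \<in> space M. 1 \<le> G \<omega>} = measure M {\<omega> \<in> space M. G \<omega> \<le> 1}" .
  have "1 = measure M ({\<omega> \<in> space M. 1 \<le> G \<omega>} \<union> {\<omega> \<in> space M. G \<omega> \<le> 1})"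
    by (subst prob_space[symmetric]) (auto intro!: arg_cong[where f="measure M"])
  also have "\<dots> \<le> measure M {\<omega> \<in> space M. 1 \<le> G \<omega>} + measure M {\<omega> \<in> space M. G \<omega> \<le> 1}"
    using Gm by (intro measure_Un_le) measurable
  finally have half: "1/2 \<le> measure M {\<omega> \<in> space M. 1 \<le> G \<omega>}" using eqm by simp
  have AEgood: "AE \<omega> in M. \<forall>j\<in>I. 0 \<le> \<tau> j \<omega> \<and> \<tau> j \<omega> \<le> 1 \<and> 1 - z * complex_of_real (\<tau> j \<omega>) \<noteq> 0"
  proof (rule AE_finite_allI[OF I(1)])
    fix j assume j: "j \<in> I"
    show "AE \<omega> in M. 0 \<le> \<tau> j \<omega> \<and> \<tau> j \<omega> \<le> 1 \<and> 1 - z * complex_of_real (\<tau> j \<omega>) \<noteq> 0"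
    proof (rule AE_tau[OF jI[OF j]])
      show "AE x in U. 0 \<le> x \<and> x \<le> 1 \<and> 1 - z * complex_of_real x \<noteq> 0"
        by (rule AE_uniform_measureI) (use AE_B[of z] in \<open>auto elim: eventually_mono\<close>)
    qed measurable
  qed
  have "measure M {\<omega> \<in> space M. 1 \<le> G \<omega>} \<le> measure M {\<omega> \<in> space M. 1/2 < cmod (V \<tau> z k \<omega>)}"
  proof (rule finite_measure_mono_AE)
    show "{\<omega> \<in> space M. 1/2 < cmod (V \<tau> z k \<omega>)} \<in> sets M" by measurable
    show "AE \<omega> in M. \<omega> \<in> {\<omega> \<in> space M. 1 \<le> G \<omega>} \<longrightarrow> \<omega> \<in> {\<omega> \<in> space M. 1/2 < cmod (V \<tau> z k \<omega>)}"
      using AEgood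
    proof eventually_elim
      case (elim \<omega>)
      have "G \<omega> \<le> cmod (V \<tau> z k \<omega>)"
      proof -
        have "G \<omega> \<le> (\<Prod>j\<in>I. cmod (ff z (\<tau> j \<omega>)))"
          unfolding G_def using elim gfun_le[OF z] gfun_pos by (intro prod_mono) (auto intro: less_imp_le)
        also have "\<dots> = cmod (V \<tau> z k \<omega>)" unfolding V_eq I_def by (simp add: prod_norm)
        finally show ?thesis .
      qed
      then show ?case by auto
    qed
  qed
  with half show ?thesis by linarith
qed

lemma notSP: assumes "0 \<le> Re z" shows "z \<notin> R_SP M \<tau>"
proof
  assume "z \<in> R_SP M \<tau>"
  then have "(\<lambda>k. measure M {\<omega> \<in> space M. 1/2 < cmod (V \<tau> z k \<omega>)}) \<longlonglongrightarrow> 0"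
    unfolding R_SP_def by (auto elim!: allE[of _ "1/2"])
  moreover have "\<exists>N. \<forall>k\<ge>N. 1/2 \<le> measure M {\<omega> \<in> space M. 1/2 < cmod (V \<tau> z k \<omega>)}"
    using half_bound[OF assms] by auto
  ultimately have "1/2 \<le> (0::real)" by (rule LIMSEQ_le_const)
  then show False by simp
qed

end



lemma ff_le: assumes "Re z \<le> 0" "0 \<le> u" "u \<le> 1" shows "cmod (ff z u) \<le> 1 + cmod z"
proof -
  have B1: "1 \<le> cmod (1 - z * complex_of_real u)" using Re_neg_B assms by auto
  then have Bnz: "1 - z * complex_of_real u \<noteq> 0" by auto
  have A: "cmod (1 + z * complex_of_real (1 - u)) \<le> 1 + cmod z" using cmod_1_plus_le[of "1 - u" z] assms by (simp del: of_real_diff)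
  have "cmod (ff z u) = cmod (1 + z * complex_of_real (1 - u)) / cmod (1 - z * complex_of_real u)"
    using ff_eq[OF Bnz] by (simp add: norm_divide del: of_real_diff)
  also have "\<dots> \<le> cmod (1 + z * complex_of_real (1 - u)) / 1"
    using B1 by (intro divide_left_mono) auto
  finally show ?thesis using A by simp
qed

lemma LL_le: assumes "Re z \<le> 0" "0 \<le> u" "u \<le> 1" shows "LL z u \<le> ln (1 + cmod z)"
proof (cases "cmod (ff z u) = 0")
  case True then show ?thesis by (simp add: LL_def)
next
  case False
  have pos: "0 < 1 + cmod z" by (smt (verit) norm_ge_zero)
  then show ?thesis unfolding LL_def using ff_le[OF assms] False
    by (subst ln_le_cancel_iff) auto
qed

lemma exp_quad: fixes t :: real assumes "\<bar>t\<bar> \<le> 1/2" shows "exp t \<le> 1 + t + 2 * t^2"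
proof -
  have "1 - t \<le> exp (- t)" using exp_ge_add_one_self[of "-t"] by simp
  moreover have pos: "0 < 1 - t" using assms by auto
  ultimately have "exp t \<le> 1 / (1 - t)" by (simp add: exp_minus field_simps)
  also have "1 / (1 - t) \<le> 1 + t + 2 * t^2"
  proof -
    have "1 \<le> (1 + t + 2 * t^2) * (1 - t)"
    proof -
      have "(1 + t + 2 * t^2) * (1 - t) = 1 + t^2 * (1 - 2 * t)" by (simp add: algebra_simps power2_eq_square power3_eq_cube)
      moreover have "0 \<le> t^2 * (1 - 2 * t)" using assms by (intro mult_nonneg_nonneg) auto
      ultimately show ?thesis by simp
    qed
    then show ?thesis using pos by (simp add: divide_le_eq)
  qed
  finally show ?thesis .
qed

lemma ffpow_meas[measurable]: "(\<lambda>u. cmod (ff z u) powr s) \<in> borel_measurable borel"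
  unfolding ff_def by measurable

lemma ffpow_integrable: assumes "Re z \<le> 0" "0 \<le> s"
  shows "integrable U (\<lambda>u. cmod (ff z u) powr s)"
proof -
  interpret prob_space U by (rule prob_U)
  show ?thesis
  proof (rule integrable_const_bound[where B="(1 + cmod z) powr s"])
    show "AE x in U. norm (cmod (ff z x) powr s) \<le> (1 + cmod z) powr s"
    proof (rule AE_uniform_measureI)
      show "AE x in lborel. x \<in> {0..1} \<longrightarrow> norm (cmod (ff z x) powr s) \<le> (1 + cmod z) powr s"
        using ff_le[OF assms(1)] assms(2) by (auto intro!: powr_mono2)
    qed auto
  qed measurable
qed

lemma exists_s: assumes z: "Re z < 0"
  shows "\<exists>s>0. s \<le> 1 \<and> integral\<^sup>L U (\<lambda>u. cmod (ff z u) powr s) < 1"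
proof -
  interpret P: prob_space U by (rule prob_U)
  define LM where "LM m u = max (LL z u) (- real m)" for m u
  have LMm[measurable]: "LM m \<in> borel_measurable borel" for m unfolding LM_def by measurable
  have intL: "integrable U (LL z)" using D_neg[OF z] by simp
  have "(\<lambda>m. integral\<^sup>L U (LM m)) \<longlonglongrightarrow> integral\<^sup>L U (LL z)"
  proof (rule integral_dominated_convergence[where w="\<lambda>u. norm (LL z u)"])
    show "integrable U (\<lambda>u. norm (LL z u))" using intL by simp
    show "AE x in U. (\<lambda>i. LM i x) \<longlonglongrightarrow> LL z x"
    proof (rule AE_I2)
      fix x
      obtain N :: nat where "- LL z x \<le> real N" using real_arch_simple by blast
      then have "\<forall>m\<ge>N. LM m x = LL z x" unfolding LM_def by auto
      then show "(\<lambda>i. LM i x) \<longlonglongrightarrow> LL z x" by (intro tendsto_eventually) (auto simp: eventually_sequentially)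
    qed
    show "AE x in U. norm (LM i x) \<le> norm (LL z x)" for i
      by (rule AE_I2) (auto simp: LM_def)
  qed auto
  moreover have "integral\<^sup>L U (LL z) < 0" using D_neg[OF z] by simp
  ultimately have "\<forall>\<^sub>F m in sequentially. integral\<^sup>L U (LM m) < 0"
    by (rule order_tendstoD)
  then obtain m where m: "integral\<^sup>L U (LM m) < 0" by (auto simp: eventually_sequentially)
  define q where "q = - integral\<^sup>L U (LM m)"
  have q: "0 < q" using m by (simp add: q_def)
  define D where "D = real m + ln (1 + cmod z)"
  have D0: "0 \<le> D" by (simp add: D_def)
  have LMb: "AE u in U. \<bar>LM m u\<bar> \<le> D \<and> LL z u \<le> LM m u"
  proof (rule AE_uniform_measureI)
    show "AE x in lborel. x \<in> {0..1} \<longrightarrow> \<bar>LM m x\<bar> \<le> D \<and> LL z x \<le> LM m x"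
    proof (rule AE_I2, rule impI)
      fix x :: real assume x: "x \<in> {0..1}"
      then have h1: "LL z x \<le> ln (1 + cmod z)" using LL_le[of z x] z by auto
      have h0: "0 \<le> ln (1 + cmod z)" by simp
      show "\<bar>LM m x\<bar> \<le> D \<and> LL z x \<le> LM m x"
      proof (cases "LL z x \<le> - real m")
        case True
        then have "LM m x = - real m" by (simp add: LM_def)
        then have "\<bar>LM m x\<bar> = real m" by simp
        then show ?thesis using h0 True unfolding D_def by (simp add: LM_def)
      next
        case False
        then have e: "LM m x = LL z x" by (simp add: LM_def)
        have "\<bar>LL z x\<bar> \<le> real m + ln (1 + cmod z)" using False h0 h1 by linarith
        then show ?thesis using e unfolding D_def by simp
      qed
    qed
  qed auto
  have intLM: "integrable U (LM m)"
    by (rule P.integrable_const_bound[where B=D]) (use LMb in \<open>auto elim: eventually_mono\<close>)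
  define q' where "q' = min q 1"
  have q': "0 < q'" "q' \<le> q" "q' \<le> 1" using q by (auto simp: q'_def)
  define E where "E = D + 1"
  have E0: "0 < E" using D0 by (simp add: E_def)
  define s where "s = q' / (4 * E^2)"
  have s0: "0 < s" using q' E0 by (simp add: s_def)
  have D1: "1 \<le> E^2" using D0 by (intro one_le_power) (simp add: E_def)
  have s1: "s \<le> 1/4" using q' D1 by (simp add: s_def divide_le_eq)
  have sD: "s * D \<le> 1/2"
  proof -
    have "s * D \<le> s * E" using s0 by (simp add: E_def)
    also have "\<dots> = q' / (4 * E)" using E0 by (simp add: s_def power2_eq_square field_simps)
    also have "\<dots> \<le> 1 / 4" using q' D0 by (simp add: divide_le_eq E_def)
    finally show ?thesis by simp
  qed
  have quad: "2 * s^2 * D^2 \<le> s * q / 2"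
  proof -
    have "2 * s^2 * D^2 \<le> 2 * s^2 * E^2" using D0 s0 by (intro mult_left_mono power_mono) (auto simp: E_def)
    also have "\<dots> = s * q' / 2" using E0 by (simp add: s_def power2_eq_square field_simps)
    also have "\<dots> \<le> s * q / 2" using s0 q' by simp
    finally show ?thesis .
  qed
  have ptw: "AE u in U. cmod (ff z u) powr s \<le> 1 + s * LM m u + 2 * s^2 * D^2"
    using LMb
  proof eventually_elim
    case (elim u)
    have t: "\<bar>s * LM m u\<bar> \<le> 1/2"
    proof -
      have "\<bar>s * LM m u\<bar> = s * \<bar>LM m u\<bar>" using s0 by (simp add: abs_mult)
      also have "\<dots> \<le> s * D" using elim s0 by (intro mult_left_mono) auto
      also note sD
      finally show ?thesis .
    qed
    have "cmod (ff z u) powr s \<le> exp (s * LM m u)"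
    proof (cases "cmod (ff z u) = 0")
      case True then show ?thesis by simp
    next
      case False
      then have "cmod (ff z u) powr s = exp (s * LL z u)" by (simp add: powr_def LL_def mult.commute)
      also have "\<dots> \<le> exp (s * LM m u)" using elim s0 by simp
      finally show ?thesis .
    qed
    also have "\<dots> \<le> 1 + s * LM m u + 2 * (s * LM m u)^2" by (rule exp_quad[OF t])
    finally have e1: "cmod (ff z u) powr s \<le> 1 + s * LM m u + 2 * (s * LM m u)^2" .
    have sq: "(s * LM m u)^2 \<le> s^2 * D^2"
    proof -
      have "(s * LM m u)^2 = \<bar>s * LM m u\<bar>^2" by simp
      also have "\<dots> \<le> (s * D)^2"
      proof (rule power_mono)
        show "\<bar>s * LM m u\<bar> \<le> s * D" using elim s0 by (simp add: abs_mult mult_left_mono)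
      qed simp
      also have "\<dots> = s^2 * D^2" by (simp add: power_mult_distrib)
      finally show ?thesis .
    qed
    show ?case using e1 sq by linarith
  qed
  have "integral\<^sup>L U (\<lambda>u. cmod (ff z u) powr s) \<le> integral\<^sup>L U (\<lambda>u. 1 + s * LM m u + 2 * s^2 * D^2)"
    by (rule integral_mono_AE[OF ffpow_integrable _ ptw]) (use z s0 intLM in auto)
  also have "\<dots> = 1 + s * integral\<^sup>L U (LM m) + 2 * s^2 * D^2"
    using intLM by (simp add: P.prob_space)
  also have "\<dots> = 1 - s * q + 2 * s^2 * D^2" by (simp add: q_def)
  also have "\<dots> < 1"
  proof -
    have "0 < s * q" using s0 q by simp
    then show ?thesis using quad by linarith
  qed
  finally show ?thesis using s0 s1 by (intro exI[of _ s]) auto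
qed



context tau_setup
begin

lemma AS_SP: assumes "z \<in> R_AS M \<tau>" shows "z \<in> R_SP M \<tau>"
proof -
  have ae: "AE \<omega> in M. (\<lambda>k. V \<tau> z k \<omega>) \<longlonglongrightarrow> 0" using assms by (simp add: R_AS_def)
  have "(\<lambda>k. measure M {\<omega> \<in> space M. e < cmod (V \<tau> z k \<omega>)}) \<longlonglongrightarrow> 0" if e: "e > 0" for e
  proof -
    define A where "A k = {\<omega> \<in> space M. e < cmod (V \<tau> z k \<omega>)}" for k
    have A[measurable]: "A k \<in> sets M" for k unfolding A_def by measurable
    have "(\<lambda>k. integral\<^sup>L M (indicator (A k) :: 'a \<Rightarrow> real)) \<longlonglongrightarrow> integral\<^sup>L M (\<lambda>_. 0 :: real)"
    proof (rule integral_dominated_convergence[where w="\<lambda>_. 1"])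
      show "AE x in M. (\<lambda>k. indicator (A k) x :: real) \<longlonglongrightarrow> 0"
        using ae
      proof eventually_elim
        case (elim \<omega>)
        then have "(\<lambda>k. cmod (V \<tau> z k \<omega>)) \<longlonglongrightarrow> 0" by (simp add: tendsto_norm_zero_iff)
        then have "\<forall>\<^sub>F k in sequentially. cmod (V \<tau> z k \<omega>) < e" using e by (rule order_tendstoD)
        then have "\<forall>\<^sub>F k in sequentially. (indicator (A k) \<omega> :: real) = 0"
          by (rule eventually_mono) (auto simp: A_def indicator_def)
        then show ?case by (rule tendsto_eventually)
      qed
      show "AE x in M. norm (indicator (A k) x :: real) \<le> 1" for k by (auto simp: indicator_def)
    qed auto
    then show ?thesis using sets.sets_into_space[OF A] by (simp add: A_def Int_absorb2)
  qed
  then show ?thesis by (simp add: R_SP_def)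
qed

lemma neg_AS: assumes z: "Re z < 0" shows "z \<in> R_AS M \<tau>"
proof -
  obtain s where s: "0 < s" "s \<le> 1" and m1: "integral\<^sup>L U (\<lambda>u. cmod (ff z u) powr s) < 1"
    using exists_s[OF z] by blast
  define m where "m = integral\<^sup>L U (\<lambda>u. cmod (ff z u) powr s)"
  have m0: "0 \<le> m" unfolding m_def by (intro Bochner_Integration.integral_nonneg) simp
  have m1': "m < 1" using m1 by (simp add: m_def)
  define r where "r = (1 + m) / 2"
  have r: "0 < r" "r < 1" "m < r" using m0 m1' by (auto simp: r_def)
  define W where "W j \<omega> = cmod (ff z (\<tau> j \<omega>)) powr s" for j \<omega>
  have Wint: "integrable M (W j)" if "j \<ge> 1" for j
    using integral_tau(2)[OF that ffpow_meas[of z s]] ffpow_integrable[of z s] z s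
    by (simp add: W_def[abs_def])
  have WE: "integral\<^sup>L M (W j) = m" if "j \<ge> 1" for j
    using integral_tau(1)[OF that ffpow_meas[of z s]] by (simp add: W_def[abs_def] m_def)
  have Wind: "indep_vars (\<lambda>_. borel) W {1..k}" for k
  proof -
    have "indep_vars (\<lambda>_. borel) (\<lambda>j \<omega>. (\<lambda>u. cmod (ff z u) powr s) (\<tau> j \<omega>)) {1..k}"
      by (rule indep_vars_compose2[OF indep_vars_subset[OF indep]]) auto
    then show ?thesis by (simp add: W_def[abs_def])
  qed
  have Vpow: "cmod (V \<tau> z k \<omega>) powr s = (\<Prod>j\<in>{1..k}. W j \<omega>)" for k \<omega>
    unfolding V_eq W_def by (simp add: prod_norm[symmetric] prod_powr_distrib)
  have EV: "(\<integral>\<omega>. cmod (V \<tau> z k \<omega>) powr s \<partial>M) = m ^ k" for k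
  proof -
    have "(\<integral>\<omega>. cmod (V \<tau> z k \<omega>) powr s \<partial>M) = (\<Prod>j\<in>{1..k}. integral\<^sup>L M (W j))"
      unfolding Vpow by (rule indep_vars_lebesgue_integral) (use Wind Wint in auto)
    also have "\<dots> = m ^ k" using WE by simp
    finally show ?thesis .
  qed
  have IV: "integrable M (\<lambda>\<omega>. cmod (V \<tau> z k \<omega>) powr s)" for k
    unfolding Vpow by (rule indep_vars_integrable) (use Wind Wint in auto)
  define A where "A k = {\<omega> \<in> space M. r ^ k \<le> cmod (V \<tau> z k \<omega>) powr s}" for k
  have A[measurable]: "A k \<in> sets M" for k unfolding A_def by measurable
  have PA: "measure M (A k) \<le> (m / r) ^ k" for k
  proof -
    have "measure M (A k) \<le> (\<integral>\<omega>. cmod (V \<tau> z k \<omega>) powr s \<partial>M) / r ^ k"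
      unfolding A_def by (rule integral_Markov_inequality_measure[OF IV, of "space M"]) (use r in auto)
    also have "\<dots> = (m / r) ^ k" by (simp add: EV power_divide)
    finally show ?thesis .
  qed
  have summ: "summable (\<lambda>k. measure M (A k))"
  proof (rule summable_comparison_test)
    show "\<exists>N. \<forall>n\<ge>N. norm (measure M (A n)) \<le> (m / r) ^ n" using PA by auto
    show "summable (\<lambda>n. (m / r) ^ n)" by (rule summable_geometric) (use r m0 in auto)
  qed
  have "AE \<omega> in M. eventually (\<lambda>k. \<omega> \<in> space M - A k) sequentially"
    by (rule borel_cantelli_AE1[OF A _ summ]) (simp add: emeasure_eq_measure)
  then have "AE \<omega> in M. (\<lambda>k. V \<tau> z k \<omega>) \<longlonglongrightarrow> 0"
  proof (rule eventually_mono)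
    fix \<omega> assume ev: "eventually (\<lambda>k. \<omega> \<in> space M - A k) sequentially"
    have "(\<lambda>k. cmod (V \<tau> z k \<omega>) powr s) \<longlonglongrightarrow> 0"
    proof (rule tendsto_sandwich[of "\<lambda>_. 0" _ _ "\<lambda>k. r ^ k"])
      show "eventually (\<lambda>k. 0 \<le> cmod (V \<tau> z k \<omega>) powr s) sequentially" by simp
      show "eventually (\<lambda>k. cmod (V \<tau> z k \<omega>) powr s \<le> r ^ k) sequentially"
        using ev by (rule eventually_mono) (auto simp: A_def)
      show "(\<lambda>k. r ^ k) \<longlonglongrightarrow> 0" by (rule LIMSEQ_power_zero) (use r in auto)
    qed simp
    then have "(\<lambda>k. (cmod (V \<tau> z k \<omega>) powr s) powr (1 / s)) \<longlonglongrightarrow> 0"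
      by (rule tendsto_zero_powrI[where b="1 / s"]) (use s in auto)
    moreover have "(cmod (V \<tau> z k \<omega>) powr s) powr (1 / s) = cmod (V \<tau> z k \<omega>)" for k
      using s by (simp add: powr_powr powr_one)
    ultimately have "(\<lambda>k. cmod (V \<tau> z k \<omega>)) \<longlonglongrightarrow> 0" by simp
    then show "(\<lambda>k. V \<tau> z k \<omega>) \<longlonglongrightarrow> 0" by (simp add: tendsto_norm_zero_iff)
  qed
  then show ?thesis by (simp add: R_AS_def)
qed

lemma expect_eq: "expectation (\<lambda>\<omega>. ln (cmod (1 + z / (1 - z * complex_of_real (\<tau> 1 \<omega>))))) = integral\<^sup>L U (LL z)"
  using integral_tau(1)[of 1 "LL z"] by (simp add: LL_def ff_def)

lemma main:
  shows "R_AS M \<tau> = R_SP M \<tau>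
    \<and> R_SP M \<tau> = {z. expectation (\<lambda>\<omega>. ln (cmod (1 + z / (1 - z * complex_of_real (\<tau> 1 \<omega>))))) < 0}
    \<and> {z. expectation (\<lambda>\<omega>. ln (cmod (1 + z / (1 - z * complex_of_real (\<tau> 1 \<omega>))))) < 0} = {z. Re z < 0}"
proof -
  have SP: "R_SP M \<tau> = {z. Re z < 0}"
  proof (intro set_eqI iffI)
    fix z assume "z \<in> R_SP M \<tau>"
    then show "z \<in> {z. Re z < 0}" using notSP[of z] by (cases "Re z < 0") auto
  next
    fix z assume "z \<in> {z. Re z < 0}"
    then show "z \<in> R_SP M \<tau>" using neg_AS AS_SP by auto
  qed
  have AS: "R_AS M \<tau> = {z. Re z < 0}"
  proof (intro set_eqI iffI)
    fix z assume "z \<in> R_AS M \<tau>"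
    then show "z \<in> {z. Re z < 0}" using AS_SP SP by auto
  next
    fix z assume "z \<in> {z. Re z < 0}"
    then show "z \<in> R_AS M \<tau>" using neg_AS by auto
  qed
  have E: "{z. expectation (\<lambda>\<omega>. ln (cmod (1 + z / (1 - z * complex_of_real (\<tau> 1 \<omega>))))) < 0} = {z. Re z < 0}"
  proof (intro set_eqI iffI)
    fix z assume "z \<in> {z. expectation (\<lambda>\<omega>. ln (cmod (1 + z / (1 - z * complex_of_real (\<tau> 1 \<omega>))))) < 0}"
    then show "z \<in> {z. Re z < 0}" using D_nonneg[of z] expect_eq[of z] by (cases "Re z < 0") auto
  next
    fix z assume "z \<in> {z. Re z < 0}"
    then show "z \<in> {z. expectation (\<lambda>\<omega>. ln (cmod (1 + z / (1 - z * complex_of_real (\<tau> 1 \<omega>))))) < 0}"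
      using D_neg(2)[of z] expect_eq[of z] by auto
  qed
  show ?thesis using SP AS E by simp
qed

end

theorem fact7:
  fixes M :: "'a measure" and \<tau> :: "nat \<Rightarrow> 'a \<Rightarrow> real"
  assumes "prob_space M"
    and "prob_space.indep_vars M (\<lambda>_. borel) \<tau> {1..}"
    and "\<And>j. j \<ge> 1 \<Longrightarrow> \<tau> j \<in> borel_measurable M"
    and "\<And>j. j \<ge> 1 \<Longrightarrow> distr M lborel (\<tau> j) = uniform_measure lborel {0..1}"
  shows "R_AS M \<tau> = R_SP M \<tau>
    \<and> R_SP M \<tau> = {z. prob_space.expectation M
          (\<lambda>\<omega>. ln (cmod (1 + z / (1 - z * complex_of_real (\<tau> 1 \<omega>))))) < 0}
    \<and> {z. prob_space.expectation M
          (\<lambda>\<omega>. ln (cmod (1 + z / (1 - z * complex_of_real (\<tau> 1 \<omega>))))) < 0}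
        = {z. Re z < 0}"
proof -
  interpret tau_setup M \<tau>
    by (rule tau_setup.intro[OF assms(1)], unfold_locales) (use assms in auto)
  show ?thesis by (rule main)
qed


end
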